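(* Let $f(x) = x^5 + a_4x^4 + a_3x^3 + a_2x^2 + a_1x + a_0$ be a real polynomial. Define $u_2 = \frac{3}{10}a_3 - \frac{3}{25}a_4^2$, $u_3 = \frac{2}{125}a_4^3 - \frac{3}{50}a_3a_4 + \frac{1}{10}a_2$, $u_4 = -\frac{3}{625}a_4^4 + \frac{3}{125}a_4^2a_3 - \frac{2}{25}a_4a_2 + \frac15 a_1$. If $u_3 = 0$, for $i_1,i_2 \in \{+1,-1\}$ let $x_{i_1,i_2} = i_1\sqrt{-u_2 + i_2\sqrt{u_2^2 - u_4}}$. If $u_3 \neq 0$, let $v_2 = -\frac{u_2^2}{3} - u_4$, $v_3 = \frac{2u_2u_4}{3} - \frac{2u_2^3}{27} - 2u_3^2$, let $C$ be a complex third root of $-v_3$ if $v_2 = 0$ and of $\frac12\left(-v_3 + \sqrt{v_3^2 + \frac{4}{27}v_2^3}\right)$ if $v_2 \neq 0$, let $y = C - \frac{v_2}{3C} - \frac{2u_2}{3}$, and let $x_{i_1,i_2} = \frac{i_1\sqrt{2y} + i_2\sqrt{-4u_2 - 2y - i_1\frac{8u_3}{\sqrt{2y}}}}{2}$. Then the four numbers $x_{i_1,i_2} - \frac{a_4}{5}$, $i_1,i_2 \in \{+1,-1\}$, are the four roots of $f'(x)$. Assume they are real, sort them as $\beta_4 \leq \beta_3 \leq \beta_2 \leq \beta_1$, let $F(x) = x^5 + a_4x^4 + a_3x^3 + a_2x^2 + a_1x$ (so $f = F + a_0$), and set $\lambda_1 = \max\{F(\beta_1),F(\beta_3)\}$,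 $\lambda_2 = \min\{F(\beta_2),F(\beta_4)\}$. Consider $(\dagger\dagger\dagger)$: $-\lambda_2 \leq a_0 \leq -\lambda_1$. Then: (1) all complex roots of $f(x)$ are real and non-negative if and only if all complex roots of $f'(x)$ are real and non-negative, $a_0 \leq 0$ and $(\dagger\dagger\dagger)$ holds; (2) all complex roots of $f(x)$ are real and positive if and only if all complex roots of $f'(x)$ are real and positive, $a_0 < 0$ and $(\dagger\dagger\dagger)$ holds.
   Context: Square roots and third roots appearing above denote arbitrary complex roots (the resulting set of four numbers $x_{i_1,i_2}$ does not depend on these choices). *)

theory Defs
  imports "HOL-Computational_Algebra.Polynomial" Complex_Main
begin

definition quintic :: "real \<Rightarrow> real \<Rightarrow> real \<Rightarrow> real \<Rightarrow> real \<Rightarrow> real poly" where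
  "quintic a4 a3 a2 a1 a0 = [:a0, a1, a2, a3, a4, 1:]"

definition Fq :: "real \<Rightarrow> real \<Rightarrow> real \<Rightarrow> real \<Rightarrow> real \<Rightarrow> real" where
  "Fq a4 a3 a2 a1 x = x^5 + a4 * x^4 + a3 * x^3 + a2 * x^2 + a1 * x"

definition u2 :: "real \<Rightarrow> real \<Rightarrow> real" where
  "u2 a4 a3 = 3/10 * a3 - 3/25 * a4^2"

definition u3 :: "real \<Rightarrow> real \<Rightarrow> real \<Rightarrow> real" where
  "u3 a4 a3 a2 = 2/125 * a4^3 - 3/50 * a3 * a4 + 1/10 * a2"

definition u4 :: "real \<Rightarrow> real \<Rightarrow> real \<Rightarrow> real \<Rightarrow> real" where
  "u4 a4 a3 a2 a1 = - 3/625 * a4^4 + 3/125 * a4^2 * a3 - 2/25 * a4 * a2 + 1/5 * a1"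

definition v2 :: "real \<Rightarrow> real \<Rightarrow> real \<Rightarrow> real \<Rightarrow> real" where
  "v2 a4 a3 a2 a1 = - ((u2 a4 a3)^2 / 3) - u4 a4 a3 a2 a1"

definition v3 :: "real \<Rightarrow> real \<Rightarrow> real \<Rightarrow> real \<Rightarrow> real" where
  "v3 a4 a3 a2 a1 = 2 * u2 a4 a3 * u4 a4 a3 a2 a1 / 3 - 2 * (u2 a4 a3)^3 / 27
                    - 2 * (u3 a4 a3 a2)^2"

text \<open>x :: sign \<Rightarrow> sign \<Rightarrow> complex (signs i1, i2 in {1,-1}) is obtained from the
  closed formula of the paper for SOME admissible choice of the complex square and
  cube roots occurring in it (each root is an arbitrary complex root).\<close>
definition root_formula_choice ::
  "real \<Rightarrow> real \<Rightarrow> real \<Rightarrow> real \<Rightarrow> (real \<Rightarrow> real \<Rightarrow> complex) \<Rightarrow> bool" where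
  "root_formula_choice a4 a3 a2 a1 x \<longleftrightarrow>
     (let U2 = complex_of_real (u2 a4 a3); U3 = complex_of_real (u3 a4 a3 a2);
          U4 = complex_of_real (u4 a4 a3 a2 a1);
          V2 = complex_of_real (v2 a4 a3 a2 a1); V3 = complex_of_real (v3 a4 a3 a2 a1) in
     (u3 a4 a3 a2 = 0 \<longrightarrow>
        (\<exists>s r. s^2 = U2^2 - U4 \<and>
               (\<forall>i2\<in>{1,-1}. (r i2)^2 = - U2 + of_real i2 * s) \<and>
               (\<forall>i1\<in>{1,-1}. \<forall>i2\<in>{1,-1}. x i1 i2 = of_real i1 * r i2))) \<and>
     (u3 a4 a3 a2 \<noteq> 0 \<longrightarrow>
        (\<exists>d C w q. d^2 = V3^2 + 4/27 * V2^3 \<and>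
               C^3 = (if v2 a4 a3 a2 a1 = 0 then - V3 else (- V3 + d) / 2) \<and>
               (let y = C - V2 / (3 * C) - 2 * U2 / 3 in
                 w^2 = 2 * y \<and>
                 (\<forall>i1\<in>{1,-1}. (q i1)^2 = - 4 * U2 - 2 * y - of_real i1 * (8 * U3 / w)) \<and>
                 (\<forall>i1\<in>{1,-1}. \<forall>i2\<in>{1,-1}.
                    x i1 i2 = (of_real i1 * w + of_real i2 * q i1) / 2)))))"

end

theory Submission
  imports Defs "HOL-Computational_Algebra.Fundamental_Theorem_Algebra"
begin


declare mult_pCons_left [simp del]

lemma order_linear_poly: "order x [:-y, 1:] = (if x = y then 1 else 0)"
  for x y :: "'a::idom"
proof (cases "x = y")
  case True thus ?thesis using order_power_n_n[of y 1] by simp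
next
  case False thus ?thesis by (simp add: order_0I)
qed

lemma order_prod_linear:
  fixes ys :: "'a::idom list"
  shows "order x (\<Prod>y\<leftarrow>ys. [:-y, 1:]) = count (mset ys) x"
proof (induction ys)
  case Nil thus ?case by simp
next
  case (Cons y ys)
  have nz: "(\<Prod>y\<leftarrow>ys. [:-y, 1:]) \<noteq> (0 :: 'a poly)"
    by (auto simp: prod_list_zero_iff)
  have "order x ([:-y,1:] * (\<Prod>y\<leftarrow>ys. [:-y, 1:])) = order x [:-y,1:] + order x (\<Prod>y\<leftarrow>ys. [:-y, 1:])"
    using nz by (intro order_mult) simp
  thus ?case using Cons by (simp add: order_linear_poly)
qed

lemma prod_linear_dvd:
  fixes ys :: "'a::idom list"
  assumes "p \<noteq> 0" "\<And>x. count (mset ys) x \<le> order x p"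
  shows "(\<Prod>y\<leftarrow>ys. [:-y, 1:]) dvd p"
  using assms
proof (induction ys arbitrary: p)
  case Nil thus ?case by simp
next
  case (Cons y ys)
  have "1 \<le> order y p" using Cons.prems(2)[of y] by simp
  hence "[:-y,1:] ^ 1 dvd p" using order_divides by blast
  then obtain q where q: "p = [:-y,1:] * q" by auto
  have qnz: "q \<noteq> 0" using q Cons.prems(1) by (metis mult_zero_right)
  have "count (mset ys) x \<le> order x q" for x
  proof -
    have "order x p = order x [:-y,1:] + order x q" unfolding q
      using qnz by (intro order_mult) simp
    thus ?thesis using Cons.prems(2)[of x] by (auto simp: order_linear_poly split: if_splits)
  qed
  hence "(\<Prod>y\<leftarrow>ys. [:-y, 1:]) dvd q" using Cons.IH qnz by blast
  thus ?case unfolding q by (simp del: mult_pCons_left add: mult_dvd_mono)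
qed

lemma monic_prod_linear_degree:
  fixes ys :: "'a::idom list"
  shows "degree (\<Prod>y\<leftarrow>ys. [:-y, 1:]) = length ys \<and> lead_coeff (\<Prod>y\<leftarrow>ys. [:-y, 1:]) = 1"
proof (induction ys)
  case Nil thus ?case by simp
next
  case (Cons y ys)
  have nz: "(\<Prod>y\<leftarrow>ys. [:-y, 1:]) \<noteq> (0 :: 'a poly)"
    by (auto simp: prod_list_zero_iff)
  have "lead_coeff ([:-y,1:] * (\<Prod>y\<leftarrow>ys. [:-y, 1:])) = lead_coeff [:-y,1:] * lead_coeff (\<Prod>y\<leftarrow>ys. [:-y, 1:])"
    by (rule lead_coeff_mult)
  hence "lead_coeff ([:-y,1:] * (\<Prod>y\<leftarrow>ys. [:-y, 1:])) = 1" using Cons.IH by auto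
  moreover have "degree ([:-y,1:] * (\<Prod>y\<leftarrow>ys. [:-y, 1:])) = Suc (length ys)"
    using Cons nz by (simp add: degree_mult_eq)
  ultimately show ?case by simp
qed

lemma eq_prod_linear:
  fixes ys :: "'a::idom list"
  assumes "p \<noteq> 0" "\<And>x. count (mset ys) x \<le> order x p" "degree p = length ys"
  shows "p = smult (lead_coeff p) (\<Prod>y\<leftarrow>ys. [:-y, 1:])"
proof -
  obtain q where q: "p = (\<Prod>y\<leftarrow>ys. [:-y, 1:]) * q" using prod_linear_dvd[OF assms(1,2)] by auto
  have qnz: "q \<noteq> 0" using q assms(1) by auto
  have nz: "(\<Prod>y\<leftarrow>ys. [:-y, 1:]) \<noteq> (0 :: 'a poly)"
    by (auto simp: prod_list_zero_iff)
  have "degree p = length ys + degree q" unfolding q using qnz nz monic_prod_linear_degree[of ys]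
    by (simp add: degree_mult_eq)
  hence "degree q = 0" using assms(3) by simp
  then obtain c where c: "q = [:c:]" by (metis degree_eq_zeroE)
  have "lead_coeff p = lead_coeff (\<Prod>y\<leftarrow>ys. [:-y, 1:]) * lead_coeff [:c:]" unfolding q c
    by (rule lead_coeff_mult)
  hence "lead_coeff p = c" using monic_prod_linear_degree[of ys] by auto
  moreover have "p = smult c (\<Prod>y\<leftarrow>ys. [:-y, 1:])" unfolding q c by (simp add: mult.commute mult_pCons_left)
  ultimately show ?thesis by metis
qed

lemma map_poly_of_real_mult:
  "map_poly complex_of_real (p * q) = map_poly of_real p * map_poly of_real q"
  by (rule poly_eqI) (simp add: coeff_map_poly coeff_mult of_real_sum)

lemma poly_map_of_real_prod:
  "poly (map_poly complex_of_real (\<Prod>y\<leftarrow>ys. [:-y, 1:])) z = (\<Prod>y\<leftarrow>ys. (z - of_real y))"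
  by (induction ys) (simp_all del: mult_pCons_left add: map_poly_of_real_mult map_poly_pCons)


lemma cardano:
  fixes V2 V3 C d :: complex
  assumes d: "d^2 = V3^2 + 4/27 * V2^3"
    and C: "C^3 = (if V2 = 0 then - V3 else (- V3 + d) / 2)"
  shows "(C - V2 / (3 * C))^3 + V2 * (C - V2 / (3 * C)) + V3 = 0"
proof (cases "V2 = 0")
  case True thus ?thesis using C by simp
next
  case False
  have C3: "C^3 = (- V3 + d) / 2" using C False by simp
  have Cnz: "C \<noteq> 0"
  proof
    assume "C = 0"
    hence "d = V3" using C3 by simp
    hence "V2^3 = 0" using d by simp
    thus False using False by simp
  qed
  have "(C - V2 / (3 * C))^3 + V2 * (C - V2 / (3 * C)) + V3 = C^3 - V2^3 / (27 * C^3) + V3"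
    using Cnz by (simp add: field_simps power3_eq_cube)
  also have "\<dots> = (27 * (C^3)^2 + 27 * V3 * C^3 - V2^3) / (27 * C^3)"
    using Cnz by (simp add: field_simps power2_eq_square)
  also have "27 * (C^3)^2 + 27 * V3 * C^3 - V2^3 = 0"
    unfolding C3 using d by (simp add: field_simps power2_eq_square)
  finally show ?thesis by simp
qed

lemma ferrari_prod:
  fixes U2 U3 U4 y w q1 q2 t :: complex
  assumes res: "y^3 + 2*U2*y^2 + (U2^2-U4)*y - 2*U3^2 = 0" and w: "w^2 = 2*y" and wnz: "w \<noteq> 0"
    and q1: "q1^2 = -4*U2 - 2*y - 8*U3/w" and q2: "q2^2 = -4*U2 - 2*y + 8*U3/w"
  shows "(t - (w+q1)/2)*(t - (w - q1)/2)*(t - (-w+q2)/2)*(t-(-w-q2)/2) = t^4 + 2*U2*t^2 + 4*U3*t + U4"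
proof -
  define k where "k = 8*U3/w"
  have kw: "k * w = 8 * U3" using wnz unfolding k_def by simp
  have wi: "w * inverse w = 1" using wnz by simp
  have q1': "q1^2 = -4*U2 - 2*y - k" using q1 unfolding k_def .
  have q2': "q2^2 = -4*U2 - 2*y + k" using q2 unfolding k_def .
  show ?thesis using res w wi kw q1' q2' by algebra
qed


lemma prod4:
  fixes g :: "real \<times> real \<Rightarrow> 'a::comm_monoid_mult"
  shows "(\<Prod>p\<in>{1,-1::real}\<times>{1,-1::real}. g p) = g (1,1) * g (1,-1) * g (-1,1) * g (-1,-1)"
proof -
  have "{1,-1::real}\<times>{1,-1::real} = {(1,1),(1,-1),(-1,1),(-1,-1)}" by auto
  thus ?thesis by (simp add: mult.assoc)
qed

lemma quartic_roots:
  assumes "root_formula_choice a4 a3 a2 a1 x"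
  shows "(t - x 1 1) * (t - x 1 (-1)) * (t - x (-1) 1) * (t - x (-1) (-1)) =
     t^4 + 2 * of_real (u2 a4 a3) * t^2 + 4 * of_real (u3 a4 a3 a2) * t + of_real (u4 a4 a3 a2 a1)"
proof (cases "u3 a4 a3 a2 = 0")
  case True
  then obtain s r where s: "s^2 = (of_real (u2 a4 a3))^2 - of_real (u4 a4 a3 a2 a1)"
    and r: "\<forall>i2\<in>{1,-1}. (r i2)^2 = - of_real (u2 a4 a3) + of_real i2 * s"
    and xr: "\<forall>i1\<in>{1,-1}. \<forall>i2\<in>{1,-1}. x i1 i2 = of_real i1 * r i2"
    using assms unfolding root_formula_choice_def Let_def by auto
  have r1: "(r 1)^2 = - of_real (u2 a4 a3) + s" and r2: "(r (-1))^2 = - of_real (u2 a4 a3) - s"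
    using r by auto
  have x: "x 1 1 = r 1" "x 1 (-1) = r (-1)" "x (-1) 1 = - r 1" "x (-1) (-1) = - r (-1)"
    using xr by auto
  show ?thesis unfolding x True using r1 r2 s by simp algebra
next
  case False
  define U2 where "U2 = complex_of_real (u2 a4 a3)"
  define U3 where "U3 = complex_of_real (u3 a4 a3 a2)"
  define U4 where "U4 = complex_of_real (u4 a4 a3 a2 a1)"
  define V2 where "V2 = complex_of_real (v2 a4 a3 a2 a1)"
  define V3 where "V3 = complex_of_real (v3 a4 a3 a2 a1)"
  obtain d C w q where d: "d^2 = V3^2 + 4/27 * V2^3"
    and C: "C^3 = (if V2 = 0 then - V3 else (- V3 + d) / 2)"
    and rest: "let y = C - V2 / (3 * C) - 2 * U2 / 3 in
                 w^2 = 2 * y \<and>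
                 (\<forall>i1\<in>{1,-1}. (q i1)^2 = - 4 * U2 - 2 * y - of_real i1 * (8 * U3 / w)) \<and>
                 (\<forall>i1\<in>{1,-1}. \<forall>i2\<in>{1,-1}.
                    x i1 i2 = (of_real i1 * w + of_real i2 * q i1) / 2)"
    using assms False unfolding root_formula_choice_def Let_def U2_def U3_def U4_def V2_def V3_def
    by auto
  define y where "y = C - V2 / (3 * C) - 2 * U2 / 3"
  have w: "w^2 = 2 * y" and q1: "(q 1)^2 = - 4 * U2 - 2 * y - 8 * U3 / w"
    and q2: "(q (-1))^2 = - 4 * U2 - 2 * y + 8 * U3 / w"
    and x: "x 1 1 = (w + q 1) / 2" "x 1 (-1) = (w - q 1) / 2" "x (-1) 1 = (- w + q (-1)) / 2"
       "x (-1) (-1) = (- w - q (-1)) / 2"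
    using rest unfolding y_def[symmetric] Let_def by auto
  have V2e: "V2 = - (U2^2 / 3) - U4" unfolding V2_def U2_def U4_def v2_def by simp
  have V3e: "V3 = 2 * U2 * U4 / 3 - 2 * U2^3 / 27 - 2 * U3^2"
    unfolding V3_def U2_def U4_def U3_def v3_def by simp
  have z: "(C - V2 / (3 * C))^3 + V2 * (C - V2 / (3 * C)) + V3 = 0"
    by (rule cardano[OF d C])
  define zz where "zz = C - V2 / (3 * C)"
  have yz: "y = zz - 2 * U2 / 3" unfolding y_def zz_def by simp
  have res: "y^3 + 2*U2*y^2 + (U2^2-U4)*y - 2*U3^2 = 0"
  proof -
    have "y^3 + 2*U2*y^2 + (U2^2-U4)*y - 2*U3^2 = zz^3 + V2 * zz + V3"
      unfolding yz V2e V3e by algebra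
    thus ?thesis using z unfolding zz_def by simp
  qed
  have U3nz: "U3 \<noteq> 0" using False unfolding U3_def by simp
  have "y \<noteq> 0" using res U3nz by auto
  hence wnz: "w \<noteq> 0" using w by auto
  show ?thesis unfolding x U2_def[symmetric] U3_def[symmetric] U4_def[symmetric]
    using ferrari_prod[OF res w wnz q1 q2] by simp
qed

lemma part1:
  assumes rfc: "root_formula_choice a4 a3 a2 a1 x"
  shows "pderiv (map_poly complex_of_real (quintic a4 a3 a2 a1 a0)) =
          smult 5 (\<Prod>p\<in>{1,-1::real}\<times>{1,-1::real}.
                     [:- (x (fst p) (snd p) - complex_of_real (a4 / 5)), 1:])"
proof -
  let ?c = "complex_of_real (a4 / 5)"
  have "poly (pderiv (map_poly complex_of_real (quintic a4 a3 a2 a1 a0))) z =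
        poly (smult 5 (\<Prod>p\<in>{1,-1::real}\<times>{1,-1::real}.
                     [:- (x (fst p) (snd p) - complex_of_real (a4 / 5)), 1:])) z" for z
  proof -
    have L: "poly (pderiv (map_poly complex_of_real (quintic a4 a3 a2 a1 a0))) z =
      5*z^4 + 4*of_real a4*z^3 + 3*of_real a3*z^2 + 2*of_real a2*z + of_real a1"
      by (simp add: quintic_def map_poly_pCons pderiv_pCons algebra_simps power2_eq_square power3_eq_cube power4_eq_xxxx)
    have R: "poly (smult 5 (\<Prod>p\<in>{1,-1::real}\<times>{1,-1::real}.
                     [:- (x (fst p) (snd p) - ?c), 1:])) z =
       5 * (((z + ?c) - x 1 1) * ((z + ?c) - x 1 (-1)) * ((z + ?c) - x (-1) 1) * ((z + ?c) - x (-1) (-1)))"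
    proof -
      have fe: "\<And>u. - (u - ?c) + z * 1 = (z + ?c) - u" by simp
      show ?thesis
        by (simp only: prod4 poly_smult poly_mult poly_pCons poly_0 fst_conv snd_conv mult_zero_right add_0_right fe)
    qed
    show ?thesis unfolding L R quartic_roots[OF rfc]
      by (simp add: u2_def u3_def u4_def) (simp add: field_simps power2_eq_square power3_eq_cube power4_eq_xxxx)
  qed
  thus ?thesis using poly_eq_poly_eq_iff by blast
qed


fun ilv :: "real list \<Rightarrow> real list \<Rightarrow> bool" where
  "ilv (r1 # r2 # rs) (b # bs) = (r2 \<le> b \<and> b \<le> r1 \<and> ilv (r2 # rs) bs)"
| "ilv [r] [] = True"
| "ilv _ _ = False"

lemma ilv_bounds: "ilv rs bs \<Longrightarrow> rs \<noteq> [] \<and> (\<forall>y\<in>set rs. y \<le> hd rs) \<and> (\<forall>y\<in>set bs. y \<le> hd rs)"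
  by (induction rs bs rule: ilv.induct) force+

lemma ilv_count: "ilv rs bs \<Longrightarrow> count (mset rs) x \<le> Suc (count (mset bs) x)"
proof (induction rs bs rule: ilv.induct)
  case (1 r1 r2 rs b bs)
  hence h: "r2 \<le> b" "b \<le> r1" "ilv (r2 # rs) bs" by auto
  have IH: "count (mset (r2 # rs)) x \<le> Suc (count (mset bs) x)" using 1 h by blast
  show ?case
  proof (cases "r1 = x")
    case False thus ?thesis using IH by (auto split: if_splits)
  next
    case True
    show ?thesis
    proof (cases "r2 = x")
      case True
      hence "b = x" using h \<open>r1 = x\<close> by simp
      thus ?thesis using IH \<open>r1 = x\<close> by simp
    next
      case False
      hence "r2 < x" using h \<open>r1 = x\<close> by simp
      hence "x \<notin> set (r2 # rs)" using ilv_bounds[OF h(3)] by force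
      hence "count (mset (r2 # rs)) x = 0" by (metis count_eq_zero_iff set_mset_mset)
      thus ?thesis using \<open>r1 = x\<close> by simp
    qed
  qed
qed auto

fun rol :: "real list \<Rightarrow> real list \<Rightarrow> bool" where
  "rol (r1 # r2 # rs) (s # ss) = (r2 \<le> r1 \<and> ((s = r1 \<and> r2 = r1) \<or> (r2 < s \<and> s < r1)) \<and> rol (r2 # rs) ss)"
| "rol [r] [] = True"
| "rol _ _ = False"

lemma rol_ilv: "rol rs ss \<Longrightarrow> ilv rs ss"
  by (induction rs ss rule: rol.induct) auto

lemma rol_count: "rol rs ss \<Longrightarrow>
   (x \<in> set rs \<longrightarrow> Suc (count (mset ss) x) \<le> count (mset rs) x) \<and> (x \<notin> set rs \<longrightarrow> count (mset ss) x \<le> 1)"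
proof (induction rs ss rule: rol.induct)
  case (1 r1 r2 rs s ss)
  hence h: "r2 \<le> r1" "(s = r1 \<and> r2 = r1) \<or> (r2 < s \<and> s < r1)" "rol (r2 # rs) ss" by auto
  have IH: "(x \<in> set (r2 # rs) \<longrightarrow> Suc (count (mset ss) x) \<le> count (mset (r2 # rs)) x) \<and>
     (x \<notin> set (r2 # rs) \<longrightarrow> count (mset ss) x \<le> 1)" using 1 h by blast
  have bd: "\<forall>y\<in>set (r2 # rs). y \<le> r2" "\<forall>y\<in>set ss. y \<le> r2"
    using ilv_bounds[OF rol_ilv[OF h(3)]] by auto
  show ?case
  proof (cases "x \<in> set (r2 # rs)")
    case True
    hence "x \<le> r2" using bd by auto
    show ?thesis
    proof (cases "r1 = x")
      case True
      hence "r2 = x" using \<open>x \<le> r2\<close> h(1) by simp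
      hence "s = x" using h(2) \<open>r1 = x\<close> by auto
      thus ?thesis using IH \<open>x \<in> set (r2 # rs)\<close> \<open>r1 = x\<close> \<open>r2 = x\<close> by simp
    next
      case False
      hence "s \<noteq> x" using h(2) \<open>x \<le> r2\<close> by auto
      hence e1: "count (mset (s # ss)) x = count (mset ss) x" by simp
      have e2: "count (mset (r1 # r2 # rs)) x = count (mset (r2 # rs)) x" using False by simp
      have "Suc (count (mset ss) x) \<le> count (mset (r2 # rs)) x" using IH \<open>x \<in> set (r2 # rs)\<close> by blast
      thus ?thesis unfolding e1 e2 using \<open>x \<in> set (r2 # rs)\<close> by simp
    qed
  next
    case False
    hence c0: "count (mset (r2 # rs)) x = 0" by (metis count_eq_zero_iff set_mset_mset)
    show ?thesis
    proof (cases "r1 = x")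
      case True
      hence "r2 < x" using False h(1) by (cases "r2 = x") auto
      hence "x \<notin> set ss" using bd by auto
      hence "count (mset ss) x = 0" by (metis count_eq_zero_iff set_mset_mset)
      moreover have "s \<noteq> x" using h(2) \<open>r1 = x\<close> False by auto
      ultimately show ?thesis using True c0 by simp
    next
      case r1: False
      show ?thesis
      proof (cases "s = x")
        case True
        hence "r2 < x" using h(2) r1 by auto
        hence "x \<notin> set ss" using bd by auto
        hence "count (mset ss) x = 0" by (metis count_eq_zero_iff set_mset_mset)
        thus ?thesis using True r1 False by simp
      next
        case sx: False
        thus ?thesis using IH False r1 by simp
      qed
    qed
  qed
qed auto


lemma prod_ge1_4:
  fixes a b c d :: real
  assumes "1 \<le> a" "1 \<le> b" "1 \<le> c" "1 \<le> d"
  shows "1 \<le> a * (b * (c * d))"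
proof -
  have "1 \<le> c * d" using assms by (metis mult_mono' mult_1 zero_le_one order_trans)
  hence "1 \<le> b * (c * d)" using assms by (metis mult_mono' mult_1 zero_le_one order_trans)
  thus ?thesis using assms by (metis mult_mono' mult_1 zero_le_one order_trans)
qed


lemma S_exists:
  fixes f :: "real poly"
  assumes deg: "degree f = 5" and lc: "lead_coeff f = 1"
   and hd: "pderiv f = smult 5 (\<Prod>y\<leftarrow>[b1,b2,b3,b4]. [:-y,1:])"
   and ord: "b4 \<le> b3" "b3 \<le> b2" "b2 \<le> b1"
   and s: "poly f b4 \<ge> 0" "poly f b3 \<le> 0" "poly f b2 \<ge> 0" "poly f b1 \<le> 0"
  shows "\<exists>r1 r2 r3 r4 r5. r5 \<le> b4 \<and> b4 \<le> r4 \<and> r4 \<le> b3 \<and> b3 \<le> r3 \<and> r3 \<le> b2 \<and> b2 \<le> r2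
     \<and> r2 \<le> b1 \<and> b1 \<le> r1 \<and> f = (\<Prod>y\<leftarrow>[r1,r2,r3,r4,r5]. [:-y,1:])"
proof -
  have dv: "poly (pderiv f) x = 5 * ((x - b1) * ((x - b2) * ((x - b3) * (x - b4))))" for x
    unfolding hd by simp algebra
  have cont: "\<forall>x. a \<le> x \<and> x \<le> b \<longrightarrow> isCont (poly f) x" for a b by simp
  have fnz: "f \<noteq> 0" using lc by auto
  obtain x0 where x0: "x0 \<le> b4" "poly f x0 < 0"
  proof -
    define m where "m = b4 - 1"
    define M where "M = \<bar>poly f m\<bar> + 1"
    have "m - M < m" unfolding M_def by simp
    from poly_MVT[OF this, of f] obtain \<xi> where xi: "m - M < \<xi>" "\<xi> < m"
      "poly f m - poly f (m - M) = (m - (m - M)) * poly (pderiv f) \<xi>" by blast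
    have "1 \<le> (b1 - \<xi>) * ((b2 - \<xi>) * ((b3 - \<xi>) * (b4 - \<xi>)))"
      using xi ord unfolding m_def by (intro prod_ge1_4) auto
    also have "\<dots> = (\<xi> - b1) * ((\<xi> - b2) * ((\<xi> - b3) * (\<xi> - b4)))" by algebra
    finally have "5 \<le> poly (pderiv f) \<xi>" unfolding dv by simp
    hence "M * 5 \<le> M * poly (pderiv f) \<xi>" by (intro mult_left_mono) (auto simp: M_def)
    hence A: "poly f (m - M) \<le> poly f m - 5 * M" using xi(3) by simp
    have "poly f (m - M) < 0" proof -
      have "poly f m \<le> M - 1" "- poly f m \<le> M - 1" unfolding M_def by auto
      thus ?thesis using A by linarith
    qed
    moreover have "m - M \<le> b4" unfolding m_def M_def by simp
    ultimately show ?thesis using that by blast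
  qed
  obtain x1 where x1: "b1 \<le> x1" "poly f x1 > 0"
  proof -
    define m where "m = b1 + 1"
    define M where "M = \<bar>poly f m\<bar> + 1"
    have "m < m + M" unfolding M_def by simp
    from poly_MVT[OF this, of f] obtain \<xi> where xi: "m < \<xi>" "\<xi> < m + M"
      "poly f (m + M) - poly f m = (m + M - m) * poly (pderiv f) \<xi>" by blast
    have "1 \<le> (\<xi> - b1) * ((\<xi> - b2) * ((\<xi> - b3) * (\<xi> - b4)))"
      using xi ord unfolding m_def by (intro prod_ge1_4) auto
    hence "5 \<le> poly (pderiv f) \<xi>" unfolding dv by simp
    hence "M * 5 \<le> M * poly (pderiv f) \<xi>" by (intro mult_left_mono) (auto simp: M_def)
    hence A: "poly f m + 5 * M \<le> poly f (m + M)" using xi(3) by simp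
    have "poly f (m + M) > 0" proof -
      have "poly f m \<le> M - 1" "- poly f m \<le> M - 1" unfolding M_def by auto
      thus ?thesis using A by linarith
    qed
    moreover have "b1 \<le> m + M" unfolding m_def M_def by simp
    ultimately show ?thesis using that by blast
  qed
  obtain r5 where r5: "x0 \<le> r5" "r5 \<le> b4" "poly f r5 = 0"
    using IVT[of "poly f" x0 0 b4] x0 s cont by auto
  obtain r4 where r4: "b4 \<le> r4" "r4 \<le> b3" "poly f r4 = 0"
    using IVT2[of "poly f" b3 0 b4] ord s cont by auto
  obtain r3 where r3: "b3 \<le> r3" "r3 \<le> b2" "poly f r3 = 0"
    using IVT[of "poly f" b3 0 b2] ord s cont by auto
  obtain r2 where r2: "b2 \<le> r2" "r2 \<le> b1" "poly f r2 = 0"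
    using IVT2[of "poly f" b1 0 b2] ord s cont by auto
  obtain r1 where r1: "b1 \<le> r1" "r1 \<le> x1" "poly f r1 = 0"
    using IVT[of "poly f" b1 0 x1] x1 s cont by auto
  have cnt: "count (mset [r1,r2,r3,r4,r5]) x \<le> order x f" for x
  proof (cases "poly f x = 0")
    case True
    have "order x f = Suc (order x (pderiv f))" using order_pderiv[OF fnz True] .
    also have "order x (pderiv f) = count (mset [b1,b2,b3,b4]) x"
      unfolding hd by (simp only: order_smult[of 5] order_prod_linear)
    moreover have "ilv [r1,r2,r3,r4,r5] [b1,b2,b3,b4]" using r1 r2 r3 r4 r5 by simp
    ultimately show ?thesis using ilv_count by (metis Suc_le_mono)
  next
    case False
    hence "x \<notin> {r1,r2,r3,r4,r5}" using r1 r2 r3 r4 r5 by auto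
    thus ?thesis by simp
  qed
  have "f = smult (lead_coeff f) (\<Prod>y\<leftarrow>[r1,r2,r3,r4,r5]. [:-y,1:])"
    by (rule eq_prod_linear[OF fnz cnt]) (simp add: deg)
  hence "f = (\<Prod>y\<leftarrow>[r1,r2,r3,r4,r5]. [:-y,1:])" using lc by simp
  thus ?thesis using r1 r2 r3 r4 r5 by blast
qed


lemma rolle_pt:
  fixes f :: "real poly"
  assumes "r' \<le> r" "poly f r' = 0" "poly f r = 0"
  shows "\<exists>s. (s = r \<and> r' = r) \<or> (r' < s \<and> s < r \<and> poly (pderiv f) s = 0)"
proof (cases "r' = r")
  case True thus ?thesis by blast
next
  case False
  hence "r' < r" using assms by simp
  from poly_MVT[OF this, of f] obtain s where "r' < s" "s < r"
     "poly f r - poly f r' = (r - r') * poly (pderiv f) s" by blast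
  thus ?thesis using assms \<open>r' < r\<close> by auto
qed


lemma sorted_mset_eq: "mset xs = mset ys \<Longrightarrow> sorted xs \<Longrightarrow> sorted ys \<Longrightarrow> xs = ys"
  by (metis properties_for_sort sorted_sort_id)

lemma poly_prod_lin: "poly (\<Prod>y\<leftarrow>ys. [:-y,1:]) x = (\<Prod>y\<leftarrow>ys. x - y)" for x :: "'a::comm_ring_1"
proof (induction ys)
  case (Cons a ys)
  have "poly (\<Prod>y\<leftarrow>a # ys. [:-y,1:]) x = poly [:-a,1:] x * poly (\<Prod>y\<leftarrow>ys. [:-y,1:]) x" by simp
  also have "poly [:-a,1:] x = x - a" by (simp add: algebra_simps)
  finally show ?case using Cons by simp
qed simp

lemma N_interlace:
  fixes f :: "real poly"
  assumes hd: "pderiv f = smult 5 (\<Prod>y\<leftarrow>[b1,b2,b3,b4]. [:-y,1:])"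
   and ord: "b4 \<le> b3" "b3 \<le> b2" "b2 \<le> b1"
   and fr: "f = (\<Prod>y\<leftarrow>[r1,r2,r3,r4,r5]. [:-y,1:])"
   and rord: "r5 \<le> r4" "r4 \<le> r3" "r3 \<le> r2" "r2 \<le> r1"
  shows "r5 \<le> b4 \<and> b4 \<le> r4 \<and> r4 \<le> b3 \<and> b3 \<le> r3 \<and> r3 \<le> b2 \<and> b2 \<le> r2 \<and> r2 \<le> b1 \<and> b1 \<le> r1"
proof -
  have fnz: "f \<noteq> 0" unfolding fr by (auto simp: prod_list_zero_iff)
  have roots: "poly f r1 = 0" "poly f r2 = 0" "poly f r3 = 0" "poly f r4 = 0" "poly f r5 = 0"
    unfolding fr poly_prod_lin by simp_all
  have froot: "poly f x = 0 \<longleftrightarrow> x \<in> set [r1,r2,r3,r4,r5]" for x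
    unfolding fr poly_prod_lin by (auto simp: prod_list_zero_iff)
  obtain s4 where s4: "(s4 = r4 \<and> r5 = r4) \<or> (r5 < s4 \<and> s4 < r4 \<and> poly (pderiv f) s4 = 0)"
    using rolle_pt[OF rord(1) roots(5) roots(4)] by blast
  obtain s3 where s3: "(s3 = r3 \<and> r4 = r3) \<or> (r4 < s3 \<and> s3 < r3 \<and> poly (pderiv f) s3 = 0)"
    using rolle_pt[OF rord(2) roots(4) roots(3)] by blast
  obtain s2 where s2: "(s2 = r2 \<and> r3 = r2) \<or> (r3 < s2 \<and> s2 < r2 \<and> poly (pderiv f) s2 = 0)"
    using rolle_pt[OF rord(3) roots(3) roots(2)] by blast
  obtain s1 where s1: "(s1 = r1 \<and> r2 = r1) \<or> (r2 < s1 \<and> s1 < r1 \<and> poly (pderiv f) s1 = 0)"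
    using rolle_pt[OF rord(4) roots(2) roots(1)] by blast
  have cc: "(x \<in> set [r1,r2,r3,r4,r5] \<longrightarrow> Suc (count (mset [s1,s2,s3,s4]) x) \<le> count (mset [r1,r2,r3,r4,r5]) x)
       \<and> (x \<notin> set [r1,r2,r3,r4,r5] \<longrightarrow> count (mset [s1,s2,s3,s4]) x \<le> 1)" for x
  proof -
    have "rol [r1,r2,r3,r4,r5] [s1,s2,s3,s4]" using rord s1 s2 s3 s4 by auto
    from rol_count[OF this, of x] show ?thesis .
  qed
  have dnz: "pderiv f \<noteq> 0" unfolding hd by (auto simp: prod_list_zero_iff)
  have cnt: "count (mset [s1,s2,s3,s4]) x \<le> order x (pderiv f)" for x
  proof (cases "poly f x = 0")
    case True
    have "order x f = Suc (order x (pderiv f))" using order_pderiv[OF fnz True] .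
    moreover have "order x f = count (mset [r1,r2,r3,r4,r5]) x"
      unfolding fr by (rule order_prod_linear)
    moreover have "x \<in> set [r1,r2,r3,r4,r5]" using True froot by blast
    hence "Suc (count (mset [s1,s2,s3,s4]) x) \<le> count (mset [r1,r2,r3,r4,r5]) x" using cc[of x] by blast
    ultimately show ?thesis by linarith
  next
    case False
    hence nx: "x \<notin> set [r1,r2,r3,r4,r5]" using froot by blast
    show ?thesis
    proof (cases "count (mset [s1,s2,s3,s4]) x = 0")
      case True thus ?thesis by linarith
    next
      case False
      hence "x \<in> set [s1,s2,s3,s4]" by (metis count_eq_zero_iff set_mset_mset)
      hence "x = s1 \<or> x = s2 \<or> x = s3 \<or> x = s4" by simp
      hence "poly (pderiv f) x = 0" using s1 s2 s3 s4 nx by auto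
      hence "order x (pderiv f) \<ge> 1" using dnz order_root by (metis less_one not_le)
      moreover have "count (mset [s1,s2,s3,s4]) x \<le> 1" using cc[of x] nx by blast
      ultimately show ?thesis by linarith
    qed
  qed
  have degd: "degree (pderiv f) = length [s1,s2,s3,s4]"
    unfolding hd using monic_prod_linear_degree[of "[b1,b2,b3,b4]"] by simp
  have lcd: "lead_coeff (pderiv f) = 5"
    unfolding hd using monic_prod_linear_degree[of "[b1,b2,b3,b4]"] by simp
  have "pderiv f = smult (lead_coeff (pderiv f)) (\<Prod>y\<leftarrow>[s1,s2,s3,s4]. [:-y,1:])"
    by (rule eq_prod_linear[OF dnz cnt degd])
  hence "(\<Prod>y\<leftarrow>[s1,s2,s3,s4]. [:-y,1:]) = (\<Prod>y\<leftarrow>[b1,b2,b3,b4]. [:-y,1:])"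
    unfolding lcd using hd by simp
  hence "count (mset [s1,s2,s3,s4]) x = count (mset [b1,b2,b3,b4]) x" for x
    by (metis order_prod_linear)
  hence "mset [s1,s2,s3,s4] = mset [b1,b2,b3,b4]" by (rule multiset_eqI)
  hence "mset [s4,s3,s2,s1] = mset [b4,b3,b2,b1]" by (metis mset_rev rev.simps append.simps)
  moreover have "sorted [s4,s3,s2,s1]" using s1 s2 s3 s4 rord by auto
  moreover have "sorted [b4,b3,b2,b1]" using ord by auto
  ultimately have "[s4,s3,s2,s1] = [b4,b3,b2,b1]" by (rule sorted_mset_eq)
  hence "s1 = b1" "s2 = b2" "s3 = b3" "s4 = b4" by simp_all
  moreover have "r5 \<le> s4 \<and> s4 \<le> r4" using s4 by auto
  moreover have "r4 \<le> s3 \<and> s3 \<le> r3" using s3 by auto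
  moreover have "r3 \<le> s2 \<and> s2 \<le> r2" using s2 by auto
  moreover have "r2 \<le> s1 \<and> s1 \<le> r1" using s1 by auto
  ultimately show ?thesis by simp
qed




lemma prod5_lessThan: "(\<Prod>i<5. g i) = g 0 * g 1 * g 2 * g 3 * g 4"
  for g :: "nat \<Rightarrow> 'a::comm_monoid_mult"
  by (simp add: eval_nat_numeral prod.lessThan_Suc)

lemma map_poly_of_real_prod_lin:
  "map_poly complex_of_real (\<Prod>y\<leftarrow>ys. [:-y,1:]) = (\<Prod>y\<leftarrow>ys. [:- complex_of_real y,1:])"
  by (induction ys) (simp_all add: map_poly_of_real_mult map_poly_pCons)

lemma map_poly_of_real_inj:
  assumes "map_poly complex_of_real p = map_poly complex_of_real q"
  shows "p = q"
proof (rule poly_eqI)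
  fix n
  have "coeff (map_poly complex_of_real p) n = coeff (map_poly complex_of_real q) n" using assms by simp
  thus "coeff p n = coeff q n" by (simp add: coeff_map_poly)
qed

lemma prod_lin_mset: "mset xs = mset ys \<Longrightarrow> (\<Prod>y\<leftarrow>xs. [:-y,1:]) = (\<Prod>y\<leftarrow>ys. [:-y,1:])"
  by (metis mset_map prod_mset_prod_list)

lemma real_factor:
  fixes f :: "real poly"
  assumes deg: "degree f = 5" and lc: "lead_coeff f = 1"
    and rr: "\<forall>z. poly (map_poly complex_of_real f) z = 0 \<longrightarrow> z \<in> \<real>"
  shows "\<exists>r1 r2 r3 r4 r5. r5 \<le> r4 \<and> r4 \<le> r3 \<and> r3 \<le> r2 \<and> r2 \<le> r1 \<and>
           f = (\<Prod>y\<leftarrow>[r1,r2,r3,r4,r5]. [:-y,1:])"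
proof -
  define g where "g = map_poly complex_of_real f"
  have degg: "degree g = 5" unfolding g_def by (simp add: deg degree_map_poly)
  have lcg: "lead_coeff g = 1" unfolding g_def using lc by (simp add: degree_map_poly coeff_map_poly)
  obtain root where rt: "smult (lead_coeff g) (\<Prod>i<degree g. [:-root i, 1:]) = g"
    using complex_poly_decompose' by blast
  hence g5: "g = (\<Prod>i<5. [:-root i, 1:])" using degg lcg by simp
  have isroot: "poly g (root i) = 0" if "i < 5" for i
  proof -
    have "poly g (root i) = (\<Prod>j<5. poly [:-root j, 1:] (root i))" unfolding g5 by (simp add: poly_prod)
    also have "\<dots> = 0" using that by (intro prod_zero) auto
    finally show ?thesis .
  qed
  have real: "root i = complex_of_real (Re (root i))" if "i < 5" for i
    using rr isroot[OF that] unfolding g_def by (metis Reals_cases Re_complex_of_real)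
  define rl where "rl = [Re (root 0), Re (root 1), Re (root 2), Re (root 3), Re (root 4)]"
  have "map_poly complex_of_real (\<Prod>y\<leftarrow>rl. [:-y,1:]) = g"
  proof -
    have re: "complex_of_real (Re (root 0)) = root 0" "complex_of_real (Re (root 1)) = root 1"
      "complex_of_real (Re (root 2)) = root 2" "complex_of_real (Re (root 3)) = root 3"
      "complex_of_real (Re (root 4)) = root 4"
      using real[of 0] real[of 1] real[of 2] real[of 3] real[of 4] by simp_all
    show ?thesis
      unfolding map_poly_of_real_prod_lin g5 prod5_lessThan rl_def
      by (simp only: list.map prod_list.Cons prod_list.Nil re mult.assoc mult_1_right)
  qed
  hence frl: "f = (\<Prod>y\<leftarrow>rl. [:-y,1:])" unfolding g_def by (intro map_poly_of_real_inj) simp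
  define sl where "sl = sort rl"
  have "mset sl = mset rl" unfolding sl_def by simp
  hence "(\<Prod>y\<leftarrow>sl. [:-y,1:]) = (\<Prod>y\<leftarrow>rl. [:-y,1:])"
    by (metis mset_map prod_mset_prod_list)
  hence fsl: "f = (\<Prod>y\<leftarrow>sl. [:-y,1:])" using frl by simp
  have "length sl = 5" unfolding sl_def rl_def by simp
  then obtain r5 r4 r3 r2 r1 where sl: "sl = [r5,r4,r3,r2,r1]"
    by (auto simp: length_Suc_conv eval_nat_numeral)
  have "sorted sl" unfolding sl_def by simp
  hence ord: "r5 \<le> r4 \<and> r4 \<le> r3 \<and> r3 \<le> r2 \<and> r2 \<le> r1" unfolding sl by simp
  have "mset [r5,r4,r3,r2,r1] = mset [r1,r2,r3,r4,r5]" by (metis mset_rev rev.simps append.simps)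
  hence "f = (\<Prod>y\<leftarrow>[r1,r2,r3,r4,r5]. [:-y,1:])" using fsl unfolding sl by (metis prod_lin_mset)
  thus ?thesis using ord by blast
qed

lemma sign_facts:
  fixes r1 r2 r3 r4 r5 b1 b2 b3 b4 :: real
  assumes fr: "f = (\<Prod>y\<leftarrow>[r1,r2,r3,r4,r5]. [:-y,1:])"
    and il: "r5 \<le> b4 \<and> b4 \<le> r4 \<and> r4 \<le> b3 \<and> b3 \<le> r3 \<and> r3 \<le> b2 \<and> b2 \<le> r2 \<and> r2 \<le> b1 \<and> b1 \<le> r1"
  shows "poly f b4 \<ge> 0 \<and> poly f b3 \<le> 0 \<and> poly f b2 \<ge> 0 \<and> poly f b1 \<le> 0"
proof -
  have pf: "poly f x = (x - r1) * ((x - r2) * ((x - r3) * ((x - r4) * (x - r5))))" for x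
    unfolding fr poly_prod_lin by simp
  have s4: "poly f b4 \<ge> 0"
  proof -
    have "(b4 - r4) * (b4 - r5) \<le> 0" using il by (intro mult_nonpos_nonneg) auto
    hence "(b4 - r3) * ((b4 - r4) * (b4 - r5)) \<ge> 0" using il by (intro mult_nonpos_nonpos) auto
    hence "(b4 - r2) * ((b4 - r3) * ((b4 - r4) * (b4 - r5))) \<le> 0" using il by (intro mult_nonpos_nonneg) auto
    hence "(b4 - r1) * ((b4 - r2) * ((b4 - r3) * ((b4 - r4) * (b4 - r5)))) \<ge> 0" using il by (intro mult_nonpos_nonpos) auto
    thus ?thesis unfolding pf .
  qed
  have s3: "poly f b3 \<le> 0"
  proof -
    have "(b3 - r4) * (b3 - r5) \<ge> 0" using il by (intro mult_nonneg_nonneg) auto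
    hence "(b3 - r3) * ((b3 - r4) * (b3 - r5)) \<le> 0" using il by (intro mult_nonpos_nonneg) auto
    hence "(b3 - r2) * ((b3 - r3) * ((b3 - r4) * (b3 - r5))) \<ge> 0" using il by (intro mult_nonpos_nonpos) auto
    hence "(b3 - r1) * ((b3 - r2) * ((b3 - r3) * ((b3 - r4) * (b3 - r5)))) \<le> 0" using il by (intro mult_nonpos_nonneg) auto
    thus ?thesis unfolding pf .
  qed
  have s2: "poly f b2 \<ge> 0"
  proof -
    have "(b2 - r4) * (b2 - r5) \<ge> 0" using il by (intro mult_nonneg_nonneg) auto
    hence "(b2 - r3) * ((b2 - r4) * (b2 - r5)) \<ge> 0" using il by (intro mult_nonneg_nonneg) auto
    hence "(b2 - r2) * ((b2 - r3) * ((b2 - r4) * (b2 - r5))) \<le> 0" using il by (intro mult_nonpos_nonneg) auto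
    hence "(b2 - r1) * ((b2 - r2) * ((b2 - r3) * ((b2 - r4) * (b2 - r5)))) \<ge> 0" using il by (intro mult_nonpos_nonpos) auto
    thus ?thesis unfolding pf .
  qed
  have s1: "poly f b1 \<le> 0"
  proof -
    have "(b1 - r4) * (b1 - r5) \<ge> 0" using il by (intro mult_nonneg_nonneg) auto
    hence "(b1 - r3) * ((b1 - r4) * (b1 - r5)) \<ge> 0" using il by (intro mult_nonneg_nonneg) auto
    hence "(b1 - r2) * ((b1 - r3) * ((b1 - r4) * (b1 - r5))) \<ge> 0" using il by (intro mult_nonneg_nonneg) auto
    hence "(b1 - r1) * ((b1 - r2) * ((b1 - r3) * ((b1 - r4) * (b1 - r5)))) \<le> 0" using il by (intro mult_nonpos_nonneg) auto
    thus ?thesis unfolding pf .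
  qed
  show ?thesis using s1 s2 s3 s4 by blast
qed

lemma left_increasing:
  fixes f :: "real poly"
  assumes dv: "\<And>x. poly (pderiv f) x = 5 * ((x - b1) * ((x - b2) * ((x - b3) * (x - b4))))"
    and ord: "b4 \<le> b3" "b3 \<le> b2" "b2 \<le> b1"
    and rt: "r < t" "t \<le> b4"
  shows "poly f r < poly f t"
proof -
  from poly_MVT[OF rt(1), of f] obtain \<xi> where xi: "r < \<xi>" "\<xi> < t"
    "poly f t - poly f r = (t - r) * poly (pderiv f) \<xi>" by blast
  have "0 < (b1 - \<xi>) * ((b2 - \<xi>) * ((b3 - \<xi>) * (b4 - \<xi>)))"
    using xi rt ord by (intro mult_pos_pos) auto
  also have "\<dots> = (\<xi> - b1) * ((\<xi> - b2) * ((\<xi> - b3) * (\<xi> - b4)))" by algebra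
  finally have "0 < poly (pderiv f) \<xi>" unfolding dv by simp
  hence "0 < (t - r) * poly (pderiv f) \<xi>" using rt by simp
  thus ?thesis using xi(3) by simp
qed

lemma pderiv_map_of_real: "pderiv (map_poly complex_of_real p) = map_poly complex_of_real (pderiv p)"
  by (rule poly_eqI) (simp add: coeff_pderiv coeff_map_poly)



lemma map_poly_of_real_smult: "map_poly complex_of_real (smult c p) = smult (of_real c) (map_poly of_real p)"
  by (rule poly_eqI) (simp add: coeff_map_poly)

lemma poly_prod_lin_g: "poly (\<Prod>y\<leftarrow>ys. [:-g y,1:]) x = (\<Prod>y\<leftarrow>ys. x - g y)" for x :: "'a::comm_ring_1"
proof (induction ys)
  case (Cons a ys)
  have "poly (\<Prod>y\<leftarrow>a # ys. [:-g y,1:]) x = poly [:-g a,1:] x * poly (\<Prod>y\<leftarrow>ys. [:-g y,1:]) x" by simp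
  also have "poly [:-g a,1:] x = x - g a" by simp
  finally show ?case using Cons by simp
qed simp

lemma roots_prod_lin:
  assumes "f = (\<Prod>y\<leftarrow>ys. [:-y,1:])"
  shows "poly (map_poly complex_of_real f) z = 0 \<longleftrightarrow> z \<in> complex_of_real ` set ys"
  unfolding assms map_poly_of_real_prod_lin poly_prod_lin_g by (auto simp: prod_list_zero_iff)

lemma part2:
  fixes a4 a3 a2 a1 a0 \<beta>1 \<beta>2 \<beta>3 \<beta>4 :: real and f :: "real poly"
  assumes fdef: "f = quintic a4 a3 a2 a1 a0"
   and hd: "pderiv f = smult 5 ([:-\<beta>1, 1:] * [:-\<beta>2, 1:] * [:-\<beta>3, 1:] * [:-\<beta>4, 1:])"
   and ord: "\<beta>4 \<le> \<beta>3" "\<beta>3 \<le> \<beta>2" "\<beta>2 \<le> \<beta>1"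
  shows "(let F = Fq a4 a3 a2 a1;
             lam1 = max (F \<beta>1) (F \<beta>3);
             lam2 = min (F \<beta>2) (F \<beta>4);
             cond = (- lam2 \<le> a0 \<and> a0 \<le> - lam1) in
         ((\<forall>z. poly (map_poly complex_of_real f) z = 0 \<longrightarrow> z \<in> \<real> \<and> 0 \<le> Re z) \<longleftrightarrow>
            (\<forall>z. poly (pderiv (map_poly complex_of_real f)) z = 0 \<longrightarrow> z \<in> \<real> \<and> 0 \<le> Re z)
            \<and> a0 \<le> 0 \<and> cond)
         \<and>
         ((\<forall>z. poly (map_poly complex_of_real f) z = 0 \<longrightarrow> z \<in> \<real> \<and> 0 < Re z) \<longleftrightarrow>
            (\<forall>z. poly (pderiv (map_poly complex_of_real f)) z = 0 \<longrightarrow> z \<in> \<real> \<and> 0 < Re z)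
            \<and> a0 < 0 \<and> cond))"
proof -
  define cond where "cond = (- min (Fq a4 a3 a2 a1 \<beta>2) (Fq a4 a3 a2 a1 \<beta>4) \<le> a0 \<and>
                               a0 \<le> - max (Fq a4 a3 a2 a1 \<beta>1) (Fq a4 a3 a2 a1 \<beta>3))"
  have pf: "poly f x = Fq a4 a3 a2 a1 x + a0" for x
    unfolding fdef quintic_def Fq_def by (simp add: algebra_simps power2_eq_square power3_eq_cube power4_eq_xxxx eval_nat_numeral)
  have deg: "degree f = 5" unfolding fdef quintic_def by simp
  have lc: "lead_coeff f = 1" unfolding fdef quintic_def by simp
  have hd': "pderiv f = smult 5 (\<Prod>y\<leftarrow>[\<beta>1,\<beta>2,\<beta>3,\<beta>4]. [:-y,1:])"
    unfolding hd by (simp only: list.map prod_list.Cons prod_list.Nil mult_1_right mult.assoc)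
  have dv: "poly (pderiv f) x = 5 * ((x - \<beta>1) * ((x - \<beta>2) * ((x - \<beta>3) * (x - \<beta>4))))" for x
    unfolding hd' poly_smult poly_prod_lin by simp
  have f0: "poly f 0 = a0" unfolding fdef quintic_def by simp
  have condiff: "cond \<longleftrightarrow> (poly f \<beta>4 \<ge> 0 \<and> poly f \<beta>3 \<le> 0 \<and> poly f \<beta>2 \<ge> 0 \<and> poly f \<beta>1 \<le> 0)"
    unfolding cond_def pf by linarith
  have rd: "poly (pderiv (map_poly complex_of_real f)) z = 0 \<longleftrightarrow>
      z \<in> complex_of_real ` set [\<beta>1,\<beta>2,\<beta>3,\<beta>4]" for z
  proof -
    have "pderiv (map_poly complex_of_real f) = smult 5 (map_poly complex_of_real (\<Prod>y\<leftarrow>[\<beta>1,\<beta>2,\<beta>3,\<beta>4]. [:-y,1:]))"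
      unfolding pderiv_map_of_real hd' map_poly_of_real_smult by simp
    hence "poly (pderiv (map_poly complex_of_real f)) z = 0 \<longleftrightarrow>
        poly (map_poly complex_of_real (\<Prod>y\<leftarrow>[\<beta>1,\<beta>2,\<beta>3,\<beta>4]. [:-y,1:])) z = 0" by simp
    thus ?thesis using roots_prod_lin[OF refl] by blast
  qed
  have RD0: "(\<forall>z. poly (pderiv (map_poly complex_of_real f)) z = 0 \<longrightarrow> z \<in> \<real> \<and> 0 \<le> Re z) \<longleftrightarrow> 0 \<le> \<beta>4"
    unfolding rd using ord by auto
  have RD1: "(\<forall>z. poly (pderiv (map_poly complex_of_real f)) z = 0 \<longrightarrow> z \<in> \<real> \<and> 0 < Re z) \<longleftrightarrow> 0 < \<beta>4"
    unfolding rd using ord by auto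
  have nec: "\<exists>r1 r2 r3 r4 r5. r5 \<le> \<beta>4 \<and> \<beta>4 \<le> r4 \<and> r4 \<le> \<beta>3 \<and> \<beta>3 \<le> r3 \<and> r3 \<le> \<beta>2 \<and> \<beta>2 \<le> r2
     \<and> r2 \<le> \<beta>1 \<and> \<beta>1 \<le> r1 \<and> f = (\<Prod>y\<leftarrow>[r1,r2,r3,r4,r5]. [:-y,1:])"
    if rr: "\<forall>z. poly (map_poly complex_of_real f) z = 0 \<longrightarrow> z \<in> \<real>"
  proof -
    obtain r1 r2 r3 r4 r5 where r: "r5 \<le> r4" "r4 \<le> r3" "r3 \<le> r2" "r2 \<le> r1"
      and fr: "f = (\<Prod>y\<leftarrow>[r1,r2,r3,r4,r5]. [:-y,1:])"
      using real_factor[OF deg lc rr] by blast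
    have "r5 \<le> \<beta>4 \<and> \<beta>4 \<le> r4 \<and> r4 \<le> \<beta>3 \<and> \<beta>3 \<le> r3 \<and> r3 \<le> \<beta>2 \<and> \<beta>2 \<le> r2 \<and> r2 \<le> \<beta>1 \<and> \<beta>1 \<le> r1"
      by (rule N_interlace[OF hd' ord fr r])
    thus ?thesis using fr by blast
  qed
  have suf: "\<exists>r1 r2 r3 r4 r5. r5 \<le> \<beta>4 \<and> \<beta>4 \<le> r4 \<and> r4 \<le> \<beta>3 \<and> \<beta>3 \<le> r3 \<and> r3 \<le> \<beta>2 \<and> \<beta>2 \<le> r2
     \<and> r2 \<le> \<beta>1 \<and> \<beta>1 \<le> r1 \<and> f = (\<Prod>y\<leftarrow>[r1,r2,r3,r4,r5]. [:-y,1:])"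
    if cond
    using S_exists[OF deg lc hd' ord] that unfolding condiff by blast
  have A: "(\<forall>z. poly (map_poly complex_of_real f) z = 0 \<longrightarrow> z \<in> \<real> \<and> 0 \<le> Re z) \<longleftrightarrow>
            (\<forall>z. poly (pderiv (map_poly complex_of_real f)) z = 0 \<longrightarrow> z \<in> \<real> \<and> 0 \<le> Re z)
            \<and> a0 \<le> 0 \<and> cond"
  proof
    assume H: "\<forall>z. poly (map_poly complex_of_real f) z = 0 \<longrightarrow> z \<in> \<real> \<and> 0 \<le> Re z"
    then obtain r1 r2 r3 r4 r5 where il: "r5 \<le> \<beta>4 \<and> \<beta>4 \<le> r4 \<and> r4 \<le> \<beta>3 \<and> \<beta>3 \<le> r3 \<and> r3 \<le> \<beta>2 \<and> \<beta>2 \<le> r2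
     \<and> r2 \<le> \<beta>1 \<and> \<beta>1 \<le> r1" and fr: "f = (\<Prod>y\<leftarrow>[r1,r2,r3,r4,r5]. [:-y,1:])"
      using nec by blast
    have "poly (map_poly complex_of_real f) (of_real r5) = 0" using roots_prod_lin[OF fr] by simp
    hence r5: "0 \<le> r5" using H by fastforce
    have "cond" unfolding condiff using sign_facts[OF fr il] .
    moreover have "0 \<le> \<beta>4" using r5 il by linarith
    moreover have "a0 \<le> 0"
    proof -
      have "a0 = (0 - r1) * ((0 - r2) * ((0 - r3) * ((0 - r4) * (0 - r5))))"
        using f0 unfolding fr poly_prod_lin by simp
      also have "\<dots> = - (r1 * (r2 * (r3 * (r4 * r5))))" by simp
      also have "\<dots> \<le> 0" using il r5 by (simp add: mult_nonneg_nonneg)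
      finally show ?thesis .
    qed
    ultimately show "(\<forall>z. poly (pderiv (map_poly complex_of_real f)) z = 0 \<longrightarrow> z \<in> \<real> \<and> 0 \<le> Re z)
            \<and> a0 \<le> 0 \<and> cond" using RD0 by blast
  next
    assume H: "(\<forall>z. poly (pderiv (map_poly complex_of_real f)) z = 0 \<longrightarrow> z \<in> \<real> \<and> 0 \<le> Re z)
            \<and> a0 \<le> 0 \<and> cond"
    hence b4: "0 \<le> \<beta>4" and a0: "a0 \<le> 0" and c: cond using RD0 by auto
    obtain r1 r2 r3 r4 r5 where il: "r5 \<le> \<beta>4 \<and> \<beta>4 \<le> r4 \<and> r4 \<le> \<beta>3 \<and> \<beta>3 \<le> r3 \<and> r3 \<le> \<beta>2 \<and> \<beta>2 \<le> r2
     \<and> r2 \<le> \<beta>1 \<and> \<beta>1 \<le> r1" and fr: "f = (\<Prod>y\<leftarrow>[r1,r2,r3,r4,r5]. [:-y,1:])"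
      using suf[OF c] by blast
    have r5: "0 \<le> r5"
    proof (rule ccontr)
      assume "\<not> 0 \<le> r5"
      hence "poly f r5 < poly f 0" using left_increasing[OF dv ord, of r5 0] b4 by simp
      moreover have "poly f r5 = 0" unfolding fr poly_prod_lin by simp
      ultimately show False using f0 a0 by simp
    qed
    show "\<forall>z. poly (map_poly complex_of_real f) z = 0 \<longrightarrow> z \<in> \<real> \<and> 0 \<le> Re z"
      unfolding roots_prod_lin[OF fr] using il r5 by auto
  qed
  have B: "(\<forall>z. poly (map_poly complex_of_real f) z = 0 \<longrightarrow> z \<in> \<real> \<and> 0 < Re z) \<longleftrightarrow>
            (\<forall>z. poly (pderiv (map_poly complex_of_real f)) z = 0 \<longrightarrow> z \<in> \<real> \<and> 0 < Re z)
            \<and> a0 < 0 \<and> cond"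
  proof
    assume H: "\<forall>z. poly (map_poly complex_of_real f) z = 0 \<longrightarrow> z \<in> \<real> \<and> 0 < Re z"
    then obtain r1 r2 r3 r4 r5 where il: "r5 \<le> \<beta>4 \<and> \<beta>4 \<le> r4 \<and> r4 \<le> \<beta>3 \<and> \<beta>3 \<le> r3 \<and> r3 \<le> \<beta>2 \<and> \<beta>2 \<le> r2
     \<and> r2 \<le> \<beta>1 \<and> \<beta>1 \<le> r1" and fr: "f = (\<Prod>y\<leftarrow>[r1,r2,r3,r4,r5]. [:-y,1:])"
      using nec by blast
    have "poly (map_poly complex_of_real f) (of_real r5) = 0" using roots_prod_lin[OF fr] by simp
    hence r5: "0 < r5" using H by fastforce
    have "cond" unfolding condiff using sign_facts[OF fr il] .
    moreover have "0 < \<beta>4" using r5 il by linarith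
    moreover have "a0 < 0"
    proof -
      have "a0 = (0 - r1) * ((0 - r2) * ((0 - r3) * ((0 - r4) * (0 - r5))))"
        using f0 unfolding fr poly_prod_lin by simp
      also have "\<dots> = - (r1 * (r2 * (r3 * (r4 * r5))))" by simp
      also have "\<dots> < 0" using il r5 by (simp add: mult_pos_pos)
      finally show ?thesis .
    qed
    ultimately show "(\<forall>z. poly (pderiv (map_poly complex_of_real f)) z = 0 \<longrightarrow> z \<in> \<real> \<and> 0 < Re z)
            \<and> a0 < 0 \<and> cond" using RD1 by blast
  next
    assume H: "(\<forall>z. poly (pderiv (map_poly complex_of_real f)) z = 0 \<longrightarrow> z \<in> \<real> \<and> 0 < Re z)
            \<and> a0 < 0 \<and> cond"
    hence b4: "0 < \<beta>4" and a0: "a0 < 0" and c: cond using RD1 by auto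
    obtain r1 r2 r3 r4 r5 where il: "r5 \<le> \<beta>4 \<and> \<beta>4 \<le> r4 \<and> r4 \<le> \<beta>3 \<and> \<beta>3 \<le> r3 \<and> r3 \<le> \<beta>2 \<and> \<beta>2 \<le> r2
     \<and> r2 \<le> \<beta>1 \<and> \<beta>1 \<le> r1" and fr: "f = (\<Prod>y\<leftarrow>[r1,r2,r3,r4,r5]. [:-y,1:])"
      using suf[OF c] by blast
    have fr5: "poly f r5 = 0" unfolding fr poly_prod_lin by simp
    have r5: "0 < r5"
    proof (rule ccontr)
      assume "\<not> 0 < r5"
      hence "r5 < 0 \<or> r5 = 0" by linarith
      thus False
      proof
        assume "r5 < 0"
        hence "poly f r5 < poly f 0" using left_increasing[OF dv ord, of r5 0] b4 by simp
        thus False using f0 a0 fr5 by simp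
      next
        assume "r5 = 0"
        thus False using f0 a0 fr5 by simp
      qed
    qed
    show "\<forall>z. poly (map_poly complex_of_real f) z = 0 \<longrightarrow> z \<in> \<real> \<and> 0 < Re z"
      unfolding roots_prod_lin[OF fr] using il r5 by auto
  qed
  show ?thesis unfolding Let_def cond_def[symmetric] using A B by blast
qed


theorem proposition3p6:
  fixes a4 a3 a2 a1 a0 :: real
  defines "f \<equiv> quintic a4 a3 a2 a1 a0"
  shows
    "(\<forall>x. root_formula_choice a4 a3 a2 a1 x \<longrightarrow>
        pderiv (map_poly complex_of_real f) =
          smult 5 (\<Prod>p\<in>{1,-1::real}\<times>{1,-1::real}.
                     [:- (x (fst p) (snd p) - complex_of_real (a4 / 5)), 1:]))
     \<and>
     (\<forall>\<beta>1 \<beta>2 \<beta>3 \<beta>4 :: real.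
        pderiv f = smult 5 ([:-\<beta>1, 1:] * [:-\<beta>2, 1:] * [:-\<beta>3, 1:] * [:-\<beta>4, 1:]) \<and>
        \<beta>4 \<le> \<beta>3 \<and> \<beta>3 \<le> \<beta>2 \<and> \<beta>2 \<le> \<beta>1 \<longrightarrow>
        (let F = Fq a4 a3 a2 a1;
             lam1 = max (F \<beta>1) (F \<beta>3);
             lam2 = min (F \<beta>2) (F \<beta>4);
             cond = (- lam2 \<le> a0 \<and> a0 \<le> - lam1) in
         ((\<forall>z. poly (map_poly complex_of_real f) z = 0 \<longrightarrow> z \<in> \<real> \<and> 0 \<le> Re z) \<longleftrightarrow>
            (\<forall>z. poly (pderiv (map_poly complex_of_real f)) z = 0 \<longrightarrow> z \<in> \<real> \<and> 0 \<le> Re z)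
            \<and> a0 \<le> 0 \<and> cond)
         \<and>
         ((\<forall>z. poly (map_poly complex_of_real f) z = 0 \<longrightarrow> z \<in> \<real> \<and> 0 < Re z) \<longleftrightarrow>
            (\<forall>z. poly (pderiv (map_poly complex_of_real f)) z = 0 \<longrightarrow> z \<in> \<real> \<and> 0 < Re z)
            \<and> a0 < 0 \<and> cond)))"
  proof -
  have fd: "f = quintic a4 a3 a2 a1 a0" by (simp add: f_def)
  have P1: "\<forall>x. root_formula_choice a4 a3 a2 a1 x \<longrightarrow>
        pderiv (map_poly complex_of_real f) =
          smult 5 (\<Prod>p\<in>{1,-1::real}\<times>{1,-1::real}.
                     [:- (x (fst p) (snd p) - complex_of_real (a4 / 5)), 1:])"
    unfolding fd using part1 by blast
  show ?thesis
  proof (intro conjI P1 allI impI)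
    fix \<beta>1 \<beta>2 \<beta>3 \<beta>4 :: real
    assume H: "pderiv f = smult 5 ([:-\<beta>1, 1:] * [:-\<beta>2, 1:] * [:-\<beta>3, 1:] * [:-\<beta>4, 1:]) \<and>
        \<beta>4 \<le> \<beta>3 \<and> \<beta>3 \<le> \<beta>2 \<and> \<beta>2 \<le> \<beta>1"
    show "let F = Fq a4 a3 a2 a1;
             lam1 = max (F \<beta>1) (F \<beta>3);
             lam2 = min (F \<beta>2) (F \<beta>4);
             cond = (- lam2 \<le> a0 \<and> a0 \<le> - lam1) in
         ((\<forall>z. poly (map_poly complex_of_real f) z = 0 \<longrightarrow> z \<in> \<real> \<and> 0 \<le> Re z) \<longleftrightarrow>
            (\<forall>z. poly (pderiv (map_poly complex_of_real f)) z = 0 \<longrightarrow> z \<in> \<real> \<and> 0 \<le> Re z)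
            \<and> a0 \<le> 0 \<and> cond)
         \<and>
         ((\<forall>z. poly (map_poly complex_of_real f) z = 0 \<longrightarrow> z \<in> \<real> \<and> 0 < Re z) \<longleftrightarrow>
            (\<forall>z. poly (pderiv (map_poly complex_of_real f)) z = 0 \<longrightarrow> z \<in> \<real> \<and> 0 < Re z)
            \<and> a0 < 0 \<and> cond)"
      using H by (intro part2[OF fd]) auto
  qed
qed

end
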